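(* Let $X$ be a Fréchet space and let $\Gamma:[0,1]\to ck(X)$ be Bochner measurable. Then there is a set $N\subseteq[0,1]$ with $\mu(N)=0$ such that $\bigcup_{t\in[0,1]\setminus N}\Gamma(t)$ is a separable subset of $X$.
   Context: $X$ is a Fréchet space with topology generated by an increasing sufficient sequence of seminorms $(p_i)$ and translation-invariant metric $d(x,y)=\sum_{i\ge1}2^{-i}\frac{p_i(x-y)}{1+p_i(x-y)}$. $cb(X)$ (resp. $ck(X)$) is the family of nonempty closed bounded convex (resp. compact convex) subsets of $X$; $H$ is the Hausdorff metric on $cb(X)$ induced by $d$. $\mu$ is Lebesgue measure on $[0,1]$. A simple multifunction is $\sum_{j=1}^p\chi_{A_j}C_j$ with $A_j$ pairwise disjoint Lebesgue measurable sets and $C_j\in cb(X)$. $\Gamma$ is Bochner measurable if there are simple multifunctions $\Gamma_n$ with $H(\Gamma_n(t),\Gamma(t))\to0$ for a.e. $t\in[0,1]$. *)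

theory Defs
  imports "HOL-Analysis.Analysis"
begin

definition is_seminorm :: "('a::real_vector \<Rightarrow> real) \<Rightarrow> bool" where
  "is_seminorm q \<longleftrightarrow> (\<forall>x y. q (x + y) \<le> q x + q y) \<and> (\<forall>c x. q (c *\<^sub>R x) = \<bar>c\<bar> * q x)"

text \<open>The translation-invariant metric d(x,y) = sum_{i>=1} 2^{-i} p_i(x-y)/(1+p_i(x-y));
  the seminorm p_i of the paper is \<open>p (i-1)\<close> here (indices start at 0).\<close>
definition fdist :: "(nat \<Rightarrow> 'a::real_vector \<Rightarrow> real) \<Rightarrow> 'a \<Rightarrow> 'a \<Rightarrow> real" where
  "fdist p x y = (\<Sum>i. (1/2) ^ Suc i * (p i (x - y) / (1 + p i (x - y))))"

definition fr_topology :: "(nat \<Rightarrow> 'a::real_vector \<Rightarrow> real) \<Rightarrow> 'a topology" where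
  "fr_topology p = topology (\<lambda>U. \<forall>x\<in>U. \<exists>i \<epsilon>. \<epsilon> > 0 \<and> {y. p i (y - x) < \<epsilon>} \<subseteq> U)"

definition frechet_seminorms :: "(nat \<Rightarrow> 'a::real_vector \<Rightarrow> real) \<Rightarrow> bool" where
  "frechet_seminorms p \<longleftrightarrow>
     (\<forall>i. is_seminorm (p i)) \<and>
     (\<forall>i x. p i x \<le> p (Suc i) x) \<and>
     (\<forall>x. (\<forall>i. p i x = 0) \<longrightarrow> x = 0) \<and>
     (\<forall>s::nat \<Rightarrow> 'a. (\<forall>e>0. \<exists>N. \<forall>m\<ge>N. \<forall>n\<ge>N. fdist p (s m) (s n) < e)
        \<longrightarrow> (\<exists>l. (\<lambda>n. fdist p (s n) l) \<longlonglongrightarrow> 0))"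

definition fr_bounded :: "(nat \<Rightarrow> 'a::real_vector \<Rightarrow> real) \<Rightarrow> 'a set \<Rightarrow> bool" where
  "fr_bounded p C \<longleftrightarrow> (\<forall>i. \<exists>M. \<forall>x\<in>C. p i x \<le> M)"

definition cb :: "(nat \<Rightarrow> 'a::real_vector \<Rightarrow> real) \<Rightarrow> 'a set set" where
  "cb p = {C. C \<noteq> {} \<and> closedin (fr_topology p) C \<and> fr_bounded p C \<and> convex C}"

definition ck :: "(nat \<Rightarrow> 'a::real_vector \<Rightarrow> real) \<Rightarrow> 'a set set" where
  "ck p = {C. C \<noteq> {} \<and> compactin (fr_topology p) C \<and> convex C}"

definition fhaus :: "(nat \<Rightarrow> 'a::real_vector \<Rightarrow> real) \<Rightarrow> 'a set \<Rightarrow> 'a set \<Rightarrow> real" where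
  "fhaus p A B = max (SUP a\<in>A. INF b\<in>B. fdist p a b) (SUP b\<in>B. INF a\<in>A. fdist p a b)"

text \<open>Simple multifunction \<open>\<Sum>j \<chi>_{A_j} C_j\<close> on [0,1]: value C_j on A_j and {0}
  (the empty Minkowski sum) outside all A_j.\<close>
definition simple_multifunction ::
  "(nat \<Rightarrow> 'a::real_vector \<Rightarrow> real) \<Rightarrow> (real \<Rightarrow> 'a set) \<Rightarrow> bool" where
  "simple_multifunction p G \<longleftrightarrow>
     (\<exists>(m::nat) (A :: nat \<Rightarrow> real set) (C :: nat \<Rightarrow> 'a set).
        (\<forall>j<m. A j \<in> sets lebesgue \<and> C j \<in> cb p) \<and>
        (\<forall>j<m. \<forall>k<m. j \<noteq> k \<longrightarrow> A j \<inter> A k = {}) \<and>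
        (\<forall>t\<in>{0..1}. G t = (if \<exists>j<m. t \<in> A j then C (THE j. j < m \<and> t \<in> A j) else {0})))"

definition bochner_measurable_mf ::
  "(nat \<Rightarrow> 'a::real_vector \<Rightarrow> real) \<Rightarrow> (real \<Rightarrow> 'a set) \<Rightarrow> bool" where
  "bochner_measurable_mf p \<Gamma> \<longleftrightarrow>
     (\<exists>G :: nat \<Rightarrow> real \<Rightarrow> 'a set. (\<forall>n. simple_multifunction p (G n)) \<and>
        (AE t in lebesgue. t \<in> {0..1} \<longrightarrow> (\<lambda>n. fhaus p (G n t) (\<Gamma> t)) \<longlonglongrightarrow> 0))"

definition fr_separable :: "(nat \<Rightarrow> 'a::real_vector \<Rightarrow> real) \<Rightarrow> 'a set \<Rightarrow> bool" where
  "fr_separable p S \<longleftrightarrow>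
     (\<exists>D. countable D \<and> D \<subseteq> S \<and> S \<subseteq> (fr_topology p) closure_of D)"

end

theory Submission
  imports Defs
begin


lemma sn_basic:
  assumes "is_seminorm q"
  shows "q 0 = 0" "q (-x) = q x" "q x \<ge> 0" "q (x + y) \<le> q x + q y" "q (x - y) = q (y - x)"
proof -
  have sc: "\<And>c x. q (c *\<^sub>R x) = \<bar>c\<bar> * q x" and tr: "\<And>x y. q (x + y) \<le> q x + q y"
    using assms unfolding is_seminorm_def by auto
  show q0: "q 0 = 0" using sc[of 0 x] by simp
  show neg: "\<And>x. q (-x) = q x" using sc[of "-1"] by simp
  show "q (x + y) \<le> q x + q y" by (rule tr)
  have "q 0 \<le> q x + q (-x)" using tr[of x "-x"] by simp
  then show "q x \<ge> 0" using q0 neg[of x] by simp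
  show "q (x - y) = q (y - x)" using neg[of "y - x"] by simp
qed

lemma f_props:
  fixes u v :: real assumes "u \<ge> 0" "v \<ge> 0"
  shows "0 \<le> u/(1+u)" "u/(1+u) < 1" "u/(1+u) \<le> u"
    "u \<le> v \<Longrightarrow> u/(1+u) \<le> v/(1+v)"
    "(u+v)/(1+(u+v)) \<le> u/(1+u) + v/(1+v)"
proof -
  show "0 \<le> u/(1+u)" using assms by simp
  show "u/(1+u) < 1" using assms by simp
  have "u*1 \<le> u*(1+u)" by (rule mult_left_mono) (use assms in auto)
  then show "u/(1+u) \<le> u" using assms by (simp add: divide_simps)
  show "u \<le> v \<Longrightarrow> u/(1+u) \<le> v/(1+v)" using assms by (simp add: divide_simps algebra_simps)
  have "u/(1+(u+v)) \<le> u/(1+u)" "v/(1+(u+v)) \<le> v/(1+v)" using assms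
    by (auto intro!: divide_left_mono)
  moreover have "(u+v)/(1+(u+v)) = u/(1+(u+v)) + v/(1+(u+v))" by (simp add: add_divide_distrib)
  ultimately show "(u+v)/(1+(u+v)) \<le> u/(1+u) + v/(1+v)" by linarith
qed

lemma hterm_le: "0 \<le> r \<Longrightarrow> r \<le> 1 \<Longrightarrow> (1/2::real)^Suc n * r \<le> (1/2)^Suc n"
  by (rule mult_left_le) auto
lemma hterm_nonneg: "0 \<le> r \<Longrightarrow> 0 \<le> (1/2::real)^Suc n * r"
  by simp
lemma hterm_norm: "0 \<le> r \<Longrightarrow> r \<le> 1 \<Longrightarrow> norm ((1/2::real)^Suc n * r) \<le> (1/2)^Suc n"
  using hterm_le[of r n] hterm_nonneg[of r n] by simp
lemma hterm_add: "c \<le> a + b \<Longrightarrow> (1/2::real)^Suc n * c \<le> (1/2)^Suc n * a + (1/2)^Suc n * b"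
  by (simp add: distrib_left[symmetric])

lemma fd_summable:
  assumes "\<forall>i. is_seminorm (p i)"
  shows "summable (\<lambda>i. (1/2::real)^Suc i * (p i v / (1 + p i v)))"
proof (rule summable_comparison_test)
  show "\<exists>N. \<forall>n\<ge>N. norm ((1/2::real)^Suc n * (p n v / (1 + p n v))) \<le> (1/2)^Suc n"
  proof (intro exI allI impI)
    fix n
    have "p n v \<ge> 0" using sn_basic(3) assms by blast
    then have "0 \<le> p n v / (1 + p n v)" "p n v / (1 + p n v) \<le> 1" using f_props by auto
    then show "norm ((1/2::real)^Suc n * (p n v / (1 + p n v))) \<le> (1/2)^Suc n"
      by (rule hterm_norm)
  qed
  show "summable (\<lambda>n. (1/2::real)^Suc n)" using power_half_series summable_def by blast
qed

lemma fd_nonneg: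
  assumes "\<forall>i. is_seminorm (p i)"
  shows "fdist p x y \<ge> 0"
  unfolding fdist_def
  by (rule suminf_nonneg[OF fd_summable[OF assms]])
     (use sn_basic(3) assms f_props(1) hterm_nonneg in blast)

lemma fd_le1:
  assumes "\<forall>i. is_seminorm (p i)"
  shows "fdist p x y \<le> 1"
proof -
  have "fdist p x y \<le> (\<Sum>i. (1/2::real)^Suc i)"
    unfolding fdist_def
  proof (rule suminf_le[OF _ fd_summable[OF assms]])
    fix n
    have "p n (x-y) \<ge> 0" using sn_basic(3) assms by blast
    then have "p n (x-y) / (1 + p n (x-y)) \<le> 1" using f_props by auto
    then show "(1/2::real)^Suc n * (p n (x-y) / (1 + p n (x-y))) \<le> (1/2)^Suc n"
      using f_props(1) \<open>p n (x-y) \<ge> 0\<close> hterm_le by blast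
  next
    show "summable (\<lambda>n. (1/2::real)^Suc n)" using power_half_series summable_def by blast
  qed
  then show ?thesis using power_half_series sums_unique by fastforce
qed

lemma fd_sym:
  assumes "\<forall>i. is_seminorm (p i)"
  shows "fdist p x y = fdist p y x"
  unfolding fdist_def using sn_basic(5) assms by metis

lemma fd_tri:
  assumes "\<forall>i. is_seminorm (p i)"
  shows "fdist p x z \<le> fdist p x y + fdist p y z"
proof -
  have "fdist p x y + fdist p y z = (\<Sum>i. (1/2::real)^Suc i * (p i (x-y) / (1 + p i (x-y))) +
      (1/2::real)^Suc i * (p i (y-z) / (1 + p i (y-z))))"
    unfolding fdist_def by (rule suminf_add[OF fd_summable[OF assms] fd_summable[OF assms]])
  moreover have "fdist p x z \<le> (\<Sum>i. (1/2::real)^Suc i * (p i (x-y) / (1 + p i (x-y))) +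
      (1/2::real)^Suc i * (p i (y-z) / (1 + p i (y-z))))"
    unfolding fdist_def
  proof (rule suminf_le[OF _ fd_summable[OF assms]])
    fix i
    let ?a = "p i (x-y)" and ?b = "p i (y-z)" and ?c = "p i (x-z)"
    have a: "?a \<ge> 0" and b: "?b \<ge> 0" and c: "?c \<ge> 0" using sn_basic(3) assms by blast+
    have "?c \<le> ?a + ?b" using sn_basic(4)[of "p i" "x-y" "y-z"] assms by simp
    then have "?c/(1+?c) \<le> (?a+?b)/(1+(?a+?b))" using f_props(4) a b c by simp
    also have "\<dots> \<le> ?a/(1+?a) + ?b/(1+?b)" using f_props(5) a b by blast
    finally show "(1/2::real)^Suc i * (?c/(1+?c)) \<le> (1/2::real)^Suc i * (?a/(1+?a)) + (1/2::real)^Suc i * (?b/(1+?b))"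
      by (rule hterm_add)
  next
    show "summable (\<lambda>i. (1/2::real)^Suc i * (p i (x-y) / (1 + p i (x-y))) +
      (1/2::real)^Suc i * (p i (y-z) / (1 + p i (y-z))))"
      by (rule summable_add[OF fd_summable[OF assms] fd_summable[OF assms]])
  qed
  ultimately show ?thesis by simp
qed

lemma fd_lower:
  assumes "\<forall>i. is_seminorm (p i)"
  shows "(1/2::real)^Suc i * (p i (x-y) / (1 + p i (x-y))) \<le> fdist p x y"
proof -
  have "(\<Sum>j\<in>{i}. (1/2::real)^Suc j * (p j (x-y) / (1 + p j (x-y)))) \<le> fdist p x y"
    unfolding fdist_def
    by (rule sum_le_suminf[OF fd_summable[OF assms]]) (use sn_basic(3) assms f_props(1) hterm_nonneg in blast)+
  then show ?thesis by simp
qed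

lemma fd_upper:
  assumes "\<forall>i. is_seminorm (p i)" "\<forall>i x. p i x \<le> p (Suc i) x"
  shows "fdist p x y \<le> p K (x-y) + (1/2)^K"
proof -
  define g where "g j = (if K \<le> j then (1/2::real)^Suc j else 0)" for j
  have g: "g sums (1/2)^K"
  proof -
    have "(\<lambda>i. g (i + K)) = (\<lambda>i. (1/2)^K * (1/2::real)^Suc i)"
      by (auto simp: g_def power_add)
    moreover have "(\<lambda>i. (1/2)^K * (1/2::real)^Suc i) sums ((1/2)^K * 1)"
      by (rule sums_mult[OF power_half_series])
    ultimately have "(\<lambda>i. g (i + K)) sums ((1/2)^K)" by simp
    moreover have "(\<Sum>i<K. g i) = 0" by (simp add: g_def)
    ultimately show ?thesis using sums_iff_shift[of g K] by simp
  qed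
  have h: "(\<lambda>j. (1/2::real)^Suc j * p K (x-y) + g j) sums (1 * p K (x-y) + (1/2)^K)"
    by (rule sums_add[OF sums_mult2[OF power_half_series] g])
  have "fdist p x y \<le> (\<Sum>j. (1/2::real)^Suc j * p K (x-y) + g j)"
    unfolding fdist_def
  proof (rule suminf_le[OF _ fd_summable[OF assms(1)]])
    fix j
    have pj: "p j (x-y) \<ge> 0" using sn_basic(3) assms by blast
    have fq: "p j (x-y) / (1 + p j (x-y)) \<le> p j (x-y)" "p j (x-y) / (1 + p j (x-y)) \<le> 1"
      using f_props[OF pj pj] by auto
    have pK: "p K (x-y) \<ge> 0" using sn_basic(3) assms by blast
    show "(1/2::real)^Suc j * (p j (x-y) / (1 + p j (x-y))) \<le> (1/2::real)^Suc j * p K (x-y) + g j"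
    proof (cases "K \<le> j")
      case True
      have "(1/2::real)^Suc j * (p j (x-y) / (1 + p j (x-y))) \<le> (1/2::real)^Suc j"
        using fq(2) f_props(1)[OF pj pj] by (rule hterm_le[rotated])
      moreover have "0 \<le> (1/2::real)^Suc j * p K (x-y)" using pK by simp
      moreover have "g j = (1/2)^Suc j" using True by (simp add: g_def)
      ultimately show ?thesis by linarith
    next
      case False
      have "p j (x-y) \<le> p K (x-y)"
        using lift_Suc_mono_le[of "\<lambda>i. p i (x-y)" j K] assms(2) False by auto
      then have "p j (x-y) / (1 + p j (x-y)) \<le> p K (x-y)" using fq by linarith
      then have "(1/2::real)^Suc j * (p j (x-y) / (1 + p j (x-y))) \<le> (1/2::real)^Suc j * p K (x-y)"
        by (rule mult_left_mono) simp
      then show ?thesis using False by (simp add: g_def)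
    qed
  next
    show "summable (\<lambda>j. (1/2::real)^Suc j * p K (x-y) + g j)" using h summable_def by blast
  qed
  then show ?thesis using h sums_unique by fastforce
qed



lemma fd_self:
  assumes "\<forall>i. is_seminorm (p i)"
  shows "fdist p x x = 0"
proof -
  have "\<forall>i. p i 0 = 0" using sn_basic(1) assms by blast
  then show ?thesis unfolding fdist_def by simp
qed

lemma fr_istop:
  assumes SN: "\<forall>i. is_seminorm (p i)" and MONO: "\<forall>i x. p i x \<le> p (Suc i) x"
  shows "istopology (\<lambda>U. \<forall>x\<in>U. \<exists>i \<epsilon>. \<epsilon> > 0 \<and> {y. p i (y - x) < \<epsilon>} \<subseteq> U)"
proof -
  define P where "P = (\<lambda>U. \<forall>x\<in>U. \<exists>i \<epsilon>. \<epsilon> > 0 \<and> {y. p i (y - x) < \<epsilon>} \<subseteq> U)"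
  have mono: "\<And>i j v. i \<le> j \<Longrightarrow> p i v \<le> p j v"
  proof -
    fix i j v assume "(i::nat) \<le> j"
    then show "p i v \<le> p j v" using MONO lift_Suc_mono_le[of "\<lambda>k. p k v" i j] by blast
  qed
  have int: "P (S \<inter> T)" if S: "P S" and T: "P T" for S T
    unfolding P_def
  proof
    fix x assume "x \<in> S \<inter> T"
    then obtain i1 e1 where 1: "e1 > 0" "{y. p i1 (y - x) < e1} \<subseteq> S"
      using S unfolding P_def by blast
    obtain i2 e2 where 2: "e2 > 0" "{y. p i2 (y - x) < e2} \<subseteq> T"
      using T \<open>x \<in> S \<inter> T\<close> unfolding P_def by blast
    have "{y. p (max i1 i2) (y - x) < min e1 e2} \<subseteq> S \<inter> T"
    proof
      fix y assume "y \<in> {y. p (max i1 i2) (y - x) < min e1 e2}"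
      then have "p (max i1 i2) (y - x) < min e1 e2" by simp
      moreover have "p i1 (y-x) \<le> p (max i1 i2) (y - x)" "p i2 (y-x) \<le> p (max i1 i2) (y - x)"
        using mono by auto
      ultimately have "p i1 (y-x) < e1" "p i2 (y-x) < e2" by linarith+
      then show "y \<in> S \<inter> T" using 1(2) 2(2) by blast
    qed
    moreover have "min e1 e2 > 0" using 1(1) 2(1) by simp
    ultimately show "\<exists>i \<epsilon>. \<epsilon> > 0 \<and> {y. p i (y - x) < \<epsilon>} \<subseteq> S \<inter> T"
      by blast
  qed
  have un: "P (\<Union>K)" if K: "\<forall>U\<in>K. P U" for K
    unfolding P_def
  proof
    fix x assume "x \<in> \<Union>K"
    then obtain U where U: "U \<in> K" "x \<in> U" by blast
    then obtain i \<epsilon> where "\<epsilon> > 0" "{y. p i (y - x) < \<epsilon>} \<subseteq> U" using K unfolding P_def by blast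
    moreover have "U \<subseteq> \<Union>K" using U(1) by blast
    ultimately show "\<exists>i \<epsilon>. \<epsilon> > 0 \<and> {y. p i (y - x) < \<epsilon>} \<subseteq> \<Union>K" by blast
  qed
  have "istopology P" unfolding istopology_def using int un by blast
  then show ?thesis by (simp add: P_def)
qed

lemma fr_openin:
  assumes SN: "\<forall>i. is_seminorm (p i)" and MONO: "\<forall>i x. p i x \<le> p (Suc i) x"
  shows "openin (fr_topology p) U \<longleftrightarrow> (\<forall>x\<in>U. \<exists>i \<epsilon>. \<epsilon> > 0 \<and> {y. p i (y - x) < \<epsilon>} \<subseteq> U)"
  unfolding fr_topology_def using topology_inverse'[OF fr_istop[OF SN MONO]] by simp

lemma fr_topspace:
  assumes SN: "\<forall>i. is_seminorm (p i)" and MONO: "\<forall>i x. p i x \<le> p (Suc i) x"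
  shows "topspace (fr_topology p) = UNIV"
proof -
  have "\<forall>x\<in>UNIV. \<exists>i \<epsilon>. \<epsilon> > 0 \<and> {y. p i (y - x) < \<epsilon>} \<subseteq> (UNIV::'a set)"
    using zero_less_one subset_UNIV by blast
  then have "openin (fr_topology p) UNIV" using fr_openin[OF SN MONO] by blast
  then show ?thesis using openin_subset by blast
qed

lemma ball_open:
  assumes SN: "\<forall>i. is_seminorm (p i)" and MONO: "\<forall>i x. p i x \<le> p (Suc i) x"
  shows "openin (fr_topology p) {y. fdist p x y < e}"
  unfolding fr_openin[OF SN MONO]
proof
  fix y assume "y \<in> {y. fdist p x y < e}"
  then have r: "e - fdist p x y > 0" by simp
  define r where "r = e - fdist p x y"
  have "((\<lambda>n. (1/2::real)^n) \<longlongrightarrow> 0) sequentially" by (rule LIMSEQ_realpow_zero) auto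
  then have "eventually (\<lambda>n. (1/2::real)^n < r/2) sequentially"
    using r r_def order_tendstoD(2)[of "\<lambda>n. (1/2::real)^n" 0 sequentially "r/2"] by simp
  then obtain K where K: "(1/2::real)^K < r/2" by (auto simp: eventually_sequentially)
  have "{z. p K (z - y) < r/2} \<subseteq> {y. fdist p x y < e}"
  proof
    fix z assume "z \<in> {z. p K (z - y) < r/2}"
    then have "p K (y - z) < r/2" using sn_basic(5)[of "p K" y z] SN by simp
    then have "fdist p y z < r" using fd_upper[OF SN MONO, of y z K] K by linarith
    then show "z \<in> {y. fdist p x y < e}" using fd_tri[OF SN, of x z y] r_def by simp
  qed
  moreover have "r/2 > 0" using r r_def by simp
  ultimately show "\<exists>i \<epsilon>. \<epsilon> > 0 \<and> {z. p i (z - y) < \<epsilon>} \<subseteq> {y. fdist p x y < e}"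
    by blast
qed

lemma closure_fd:
  assumes SN: "\<forall>i. is_seminorm (p i)" and MONO: "\<forall>i x. p i x \<le> p (Suc i) x"
    and D: "\<forall>e>0. \<exists>d\<in>D. fdist p x d < e"
  shows "x \<in> fr_topology p closure_of D"
  unfolding in_closure_of fr_topspace[OF SN MONO]
proof (intro conjI allI impI)
  fix T assume "x \<in> T \<and> openin (fr_topology p) T"
  then obtain i \<epsilon> where e: "\<epsilon> > 0" "{y. p i (y - x) < \<epsilon>} \<subseteq> T"
    using fr_openin[OF SN MONO] by blast
  define \<delta> where "\<delta> = (1/2::real)^Suc i * (\<epsilon>/(1+\<epsilon>))"
  have "\<delta> > 0" using e by (simp add: \<delta>_def)
  then obtain d where d: "d \<in> D" "fdist p x d < \<delta>" using D by blast
  have q0: "p i (x - d) \<ge> 0" using sn_basic(3) SN by blast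
  have "(1/2::real)^Suc i * (p i (x-d) / (1 + p i (x-d))) < (1/2::real)^Suc i * (\<epsilon>/(1+\<epsilon>))"
    using fd_lower[OF SN, of i x d] d \<delta>_def by linarith
  then have lt: "p i (x-d) / (1 + p i (x-d)) < \<epsilon>/(1+\<epsilon>)" by (rule mult_left_less_imp_less) simp
  have "p i (x-d) < \<epsilon>"
  proof (rule ccontr)
    assume "\<not> p i (x-d) < \<epsilon>"
    then have "\<epsilon>/(1+\<epsilon>) \<le> p i (x-d) / (1 + p i (x-d))" using f_props(4) e q0 by simp
    then show False using lt by simp
  qed
  then have "p i (d - x) < \<epsilon>" using sn_basic(5)[of "p i" x d] SN by simp
  then show "\<exists>y. y \<in> D \<and> y \<in> T" using d e by blast
qed simp

lemma compact_sep:
  assumes SN: "\<forall>i. is_seminorm (p i)" and MONO: "\<forall>i x. p i x \<le> p (Suc i) x"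
    and C: "compactin (fr_topology p) C"
  shows "\<exists>D. countable D \<and> D \<subseteq> C \<and> (\<forall>x\<in>C. \<forall>e>0. \<exists>d\<in>D. fdist p x d < e)"
proof -
  have "\<forall>m::nat. \<exists>F. finite F \<and> F \<subseteq> C \<and> C \<subseteq> (\<Union>x\<in>F. {y. fdist p x y < 1/Suc m})"
  proof
    fix m :: nat
    let ?U = "(\<lambda>x. {y. fdist p x y < 1/Suc m}) ` C"
    have "\<forall>U\<in>?U. openin (fr_topology p) U" using ball_open[OF SN MONO] by blast
    moreover have "C \<subseteq> \<Union>?U"
    proof
      fix y assume "y \<in> C"
      moreover have "fdist p y y < 1/Suc m" using fd_self[OF SN] by simp
      ultimately show "y \<in> \<Union>?U" by blast
    qed
    moreover have "\<forall>\<U>. (\<forall>U \<in> \<U>. openin (fr_topology p) U) \<and> C \<subseteq> \<Union>\<U>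
          \<longrightarrow> (\<exists>\<F>. finite \<F> \<and> \<F> \<subseteq> \<U> \<and> C \<subseteq> \<Union>\<F>)"
      using C unfolding compactin_def by (elim conjE)
    ultimately have "\<exists>\<F>. finite \<F> \<and> \<F> \<subseteq> ?U \<and> C \<subseteq> \<Union>\<F>" by blast
    then obtain \<F> where "finite \<F>" "\<F> \<subseteq> ?U" "C \<subseteq> \<Union>\<F>" by blast
    then obtain F where "F \<subseteq> C" "finite F" "\<F> = (\<lambda>x. {y. fdist p x y < 1/Suc m}) ` F"
      using finite_subset_image[OF \<open>finite \<F>\<close> \<open>\<F> \<subseteq> ?U\<close>] by blast
    then show "\<exists>F. finite F \<and> F \<subseteq> C \<and> C \<subseteq> (\<Union>x\<in>F. {y. fdist p x y < 1/Suc m})"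
      using \<open>C \<subseteq> \<Union>\<F>\<close> by blast
  qed
  then obtain F where F0: "\<forall>m. finite (F m) \<and> F m \<subseteq> C \<and> C \<subseteq> (\<Union>x\<in>F m. {y. fdist p x y < 1/Suc m})"
    using choice[of "\<lambda>m F. finite F \<and> F \<subseteq> C \<and> C \<subseteq> (\<Union>x\<in>F. {y. fdist p x y < 1/Suc m})"] by blast
  then have F: "\<And>m. finite (F m)" "\<And>m. F m \<subseteq> C"
    "\<And>m::nat. C \<subseteq> (\<Union>x\<in>F m. {y. fdist p x y < 1/Suc m})" by auto
  show ?thesis
  proof (intro exI conjI ballI allI impI)
    show "countable (\<Union>m. F m)" using F(1) by (simp add: countable_finite)
    show "(\<Union>m. F m) \<subseteq> C" using F(2) by blast
    fix x e assume "x \<in> C" "(e::real) > 0"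
    then obtain m where m: "inverse (real (Suc m)) < e" using reals_Archimedean by blast
    obtain d where "d \<in> F m" "fdist p d x < 1/Suc m" using F(3)[of m] \<open>x \<in> C\<close> by blast
    moreover have "inverse (real (Suc m)) = 1/Suc m" by (simp add: inverse_eq_divide)
    ultimately have "fdist p x d < e" using m fd_sym[OF SN, of d x] by linarith
    then show "\<exists>d\<in>\<Union>m. F m. fdist p x d < e"
      using \<open>d \<in> F m\<close> by blast
  qed
qed



lemma haus_gen:
  fixes f :: "'a \<Rightarrow> 'b \<Rightarrow> real"
  assumes f0: "\<And>a b. 0 \<le> f a b" and f1: "\<And>a b. f a b \<le> 1" and A: "A \<noteq> {}" and B: "B \<noteq> {}"
    and lt: "(SUP a\<in>A. INF b\<in>B. f a b) < e"
  shows "\<forall>a\<in>A. \<exists>b\<in>B. f a b < e"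
proof
  fix a assume a: "a \<in> A"
  obtain b0 where b0: "b0 \<in> B" using B by blast
  have bb: "\<And>a. bdd_below ((f a) ` B)" unfolding bdd_below_def using f0 by blast
  have "\<And>a. (INF b\<in>B. f a b) \<le> 1"
    using cINF_lower[OF bb b0] f1 order_trans by blast
  then have "bdd_above ((\<lambda>a. INF b\<in>B. f a b) ` A)" unfolding bdd_above_def by blast
  then have "(INF b\<in>B. f a b) \<le> (SUP a\<in>A. INF b\<in>B. f a b)" by (rule cSUP_upper[OF a])
  then have "(INF b\<in>B. f a b) < e" using lt by linarith
  then show "\<exists>b\<in>B. f a b < e" using cINF_less_iff[OF B bb] by blast
qed

lemma haus_lt:
  assumes SN: "\<forall>i. is_seminorm (p i)" and A: "A \<noteq> {}" and B: "B \<noteq> {}"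
    and lt: "fhaus p A B < e"
  shows "\<forall>a\<in>A. \<exists>b\<in>B. fdist p a b < e" "\<forall>b\<in>B. \<exists>a\<in>A. fdist p a b < e"
proof -
  have "(SUP a\<in>A. INF b\<in>B. fdist p a b) < e" "(SUP b\<in>B. INF a\<in>A. fdist p a b) < e"
    using lt unfolding fhaus_def by linarith+
  then show "\<forall>a\<in>A. \<exists>b\<in>B. fdist p a b < e" "\<forall>b\<in>B. \<exists>a\<in>A. fdist p a b < e"
    using haus_gen[of "fdist p" A B e] haus_gen[of "\<lambda>b a. fdist p a b" B A e]
      fd_nonneg[OF SN] fd_le1[OF SN] A B by blast+
qed

lemma sm_props:
  fixes p :: "nat \<Rightarrow> 'a::real_vector \<Rightarrow> real" and G :: "real \<Rightarrow> 'a set"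
  assumes "simple_multifunction p G"
  shows "finite (G ` {0..1})" "\<forall>t\<in>{0..1}. G t \<noteq> {}"
proof -
  obtain m :: nat and A :: "nat \<Rightarrow> real set" and C :: "nat \<Rightarrow> 'a set" where AC: "\<forall>j<m. A j \<in> sets lebesgue \<and> C j \<in> cb p"
    "\<forall>j<m. \<forall>k<m. j \<noteq> k \<longrightarrow> A j \<inter> A k = {}"
    "\<forall>t\<in>{0..1}. G t = (if \<exists>j<m. t \<in> A j then C (THE j. j < m \<and> t \<in> A j) else {0})"
    using assms unfolding simple_multifunction_def by blast
  have key: "G t = {0} \<or> (\<exists>j<m. G t = C j)" if t: "t \<in> {0..1}" for t
  proof (cases "\<exists>j<m. t \<in> A j")
    case True
    then obtain j where j: "j < m" "t \<in> A j" by blast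
    have "(THE j. j < m \<and> t \<in> A j) = j"
    proof (rule the_equality)
      show "j < m \<and> t \<in> A j" using j by simp
      fix k assume "k < m \<and> t \<in> A k"
      then show "k = j" using AC(2) j by (metis disjoint_iff)
    qed
    then have "G t = C j" using AC(3) t True by simp
    then show ?thesis using j(1) by blast
  next
    case False
    have "G t = (if \<exists>j<m. t \<in> A j then C (THE j. j < m \<and> t \<in> A j) else {0})"
      using AC(3) t by blast
    then have "G t = {0}" using False by (simp only: if_False)
    then show ?thesis by blast
  qed
  have "G ` {0..1} \<subseteq> insert {0} (C ` {..<m})" using key by blast
  then show "finite (G ` {0..1})" by (rule finite_subset) simp
  have "\<forall>j<m. C j \<noteq> {}" using AC(1) unfolding cb_def by blast
  then show "\<forall>t\<in>{0..1}. G t \<noteq> {}" using key by (metis insert_not_empty)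
qed



theorem theorem3p6:
  fixes p :: "nat \<Rightarrow> 'a::real_vector \<Rightarrow> real"
    and \<Gamma> :: "real \<Rightarrow> 'a set"
  assumes "frechet_seminorms p"
    and "\<forall>t\<in>{0..1}. \<Gamma> t \<in> ck p"
    and "bochner_measurable_mf p \<Gamma>"
  shows "\<exists>N. N \<subseteq> {0..1} \<and> N \<in> null_sets lebesgue \<and>
           fr_separable p (\<Union>t\<in>{0..1} - N. \<Gamma> t)"
proof -
  have SN: "\<forall>i. is_seminorm (p i)" and MONO: "\<forall>i x. p i x \<le> p (Suc i) x"
    using assms(1) unfolding frechet_seminorms_def by blast+
  have Gne: "\<And>t. t \<in> {0..1} \<Longrightarrow> \<Gamma> t \<noteq> {}" and Gc: "\<And>t. t \<in> {0..1} \<Longrightarrow> compactin (fr_topology p) (\<Gamma> t)"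
    using assms(2) unfolding ck_def by blast+
  obtain G :: "nat \<Rightarrow> real \<Rightarrow> 'a set" where G: "\<And>n. simple_multifunction p (G n)"
    and AE: "AE t in lebesgue. t \<in> {0..1} \<longrightarrow> (\<lambda>n. fhaus p (G n t) (\<Gamma> t)) \<longlonglongrightarrow> 0"
    using assms(3) unfolding bochner_measurable_mf_def by blast
  obtain N0 where N0: "N0 \<in> null_sets lebesgue"
    "{t \<in> space lebesgue. \<not> (t \<in> {0..1} \<longrightarrow> (\<lambda>n. fhaus p (G n t) (\<Gamma> t)) \<longlonglongrightarrow> 0)} \<subseteq> N0"
    using AE unfolding eventually_ae_filter by blast
  define N where "N = {0..1} \<inter> N0"
  have Nnull: "N \<in> null_sets lebesgue" unfolding N_def by (rule null_set_Int1[OF N0(1)]) simp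
  have conv: "\<And>t. t \<in> {0..1} - N \<Longrightarrow> (\<lambda>n. fhaus p (G n t) (\<Gamma> t)) \<longlonglongrightarrow> 0"
    using N0(2) unfolding N_def by auto
  have "\<forall>t\<in>{0..1}. \<exists>D. countable D \<and> D \<subseteq> \<Gamma> t \<and> (\<forall>x\<in>\<Gamma> t. \<forall>e>0. \<exists>d\<in>D. fdist p x d < e)"
    using compact_sep[OF SN MONO Gc] by blast
  then have "\<exists>Dt. \<forall>t\<in>{0..1}. countable (Dt t) \<and> Dt t \<subseteq> \<Gamma> t \<and> (\<forall>x\<in>\<Gamma> t. \<forall>e>0. \<exists>d\<in>Dt t. fdist p x d < e)"
    by (rule bchoice)
  then obtain Dt where Dt0: "\<forall>t\<in>{0..1}. countable (Dt t) \<and> Dt t \<subseteq> \<Gamma> t \<and> (\<forall>x\<in>\<Gamma> t. \<forall>e>0. \<exists>d\<in>Dt t. fdist p x d < e)"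
    by (elim exE)
  have Dt: "\<And>t. t \<in> {0..1} \<Longrightarrow> countable (Dt t)" "\<And>t. t \<in> {0..1} \<Longrightarrow> Dt t \<subseteq> \<Gamma> t"
    "\<And>t x e. t \<in> {0..1} \<Longrightarrow> x \<in> \<Gamma> t \<Longrightarrow> e > 0 \<Longrightarrow> \<exists>d\<in>Dt t. fdist p x d < e"
    using Dt0 by simp_all
  define SS where "SS = (\<Union>n. G n ` ({0..1} - N))"
  have "countable SS" unfolding SS_def
  proof (rule countable_UN)
    fix n
    have "finite (G n ` {0..1})" using sm_props(1)[OF G] by blast
    then have "finite (G n ` ({0..1} - N))" by (rule finite_subset[rotated]) blast
    then show "countable (G n ` ({0..1} - N))" by (rule countable_finite)
  qed simp
  define P where "P S t e \<longleftrightarrow> t \<in> {0..1} - N \<and> (\<forall>y\<in>S. \<exists>z\<in>\<Gamma> t. fdist p y z < e)" for S t e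
  define tsel where "tsel S m = (SOME t. P S t (1 / real (Suc m)))" for S m
  define T where "T = (\<Union>S\<in>SS. \<Union>m. if \<exists>t. P S t (1 / real (Suc m)) then {tsel S m} else {})"
  have Tsub: "\<And>t. t \<in> T \<Longrightarrow> t \<in> {0..1} - N"
  proof -
    fix t assume "t \<in> T"
    then obtain S m where ex1: "\<exists>t. P S t (1 / real (Suc m))" and tt: "t = tsel S m"
      unfolding T_def by (auto split: if_splits)
    have "P S t (1 / real (Suc m))" unfolding tt tsel_def by (rule someI_ex[OF ex1])
    then show "t \<in> {0..1} - N" unfolding P_def by blast
  qed
  have "countable T" unfolding T_def using \<open>countable SS\<close> by (intro countable_UN) auto
  define D where "D = (\<Union>t\<in>T. Dt t)"
  have cD: "countable D" unfolding D_def using \<open>countable T\<close> Dt(1) Tsub by (intro countable_UN) auto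
  have DU: "D \<subseteq> (\<Union>t\<in>{0..1} - N. \<Gamma> t)" unfolding D_def using Dt(2) Tsub by blast
  have dense: "\<exists>d\<in>D. fdist p x d < e" if x: "x \<in> \<Gamma> t" and t: "t \<in> {0..1} - N" and e: "e > 0" for x t e
  proof -
    obtain m :: nat where m: "inverse (real (Suc m)) < e/3" using reals_Archimedean[of "e/3"] e by auto
    have m': "1 / real (Suc m) < e/3" using m by (simp add: inverse_eq_divide)
    have "eventually (\<lambda>n. fhaus p (G n t) (\<Gamma> t) < 1 / real (Suc m)) sequentially"
      using conv[OF t] by (rule order_tendstoD(2)) simp
    then obtain n where n: "fhaus p (G n t) (\<Gamma> t) < 1 / real (Suc m)"
      by (auto simp: eventually_sequentially)
    define S where "S = G n t"
    have SSS: "S \<in> SS" unfolding SS_def S_def using t by blast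
    have Sne: "S \<noteq> {}" unfolding S_def using sm_props(2)[OF G] t by blast
    have t01: "t \<in> {0..1}" using t by blast
    note h = haus_lt[OF SN Sne Gne[OF t01] n[folded S_def]]
    have Pt: "P S t (1 / real (Suc m))" unfolding P_def using t h(1) by blast
    then have ex: "\<exists>t. P S t (1 / real (Suc m))" by blast
    define t' where "t' = tsel S m"
    have Pt': "P S t' (1 / real (Suc m))" unfolding t'_def tsel_def by (rule someI_ex[OF ex])
    have "t' \<in> (if \<exists>t. P S t (1 / real (Suc m)) then {tsel S m} else {})"
      using ex unfolding t'_def by (simp only: if_True singleton_iff)
    then have t'T: "t' \<in> T" unfolding T_def using SSS by (intro UN_I[of S] UN_I[of m]) simp_all
    have t'01: "t' \<in> {0..1}" using Pt' unfolding P_def by blast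
    obtain y where y: "y \<in> S" "fdist p y x < 1 / real (Suc m)" using h(2) x by blast
    obtain z where z: "z \<in> \<Gamma> t'" "fdist p y z < 1 / real (Suc m)" using Pt' y(1) unfolding P_def by blast
    obtain d where d: "d \<in> Dt t'" "fdist p z d < e/3" using Dt(3)[OF t'01 z(1), of "e/3"] e by auto
    have "fdist p x d \<le> fdist p x y + fdist p y d" by (rule fd_tri[OF SN])
    moreover have "fdist p y d \<le> fdist p y z + fdist p z d" by (rule fd_tri[OF SN])
    moreover have "fdist p x y = fdist p y x" by (rule fd_sym[OF SN])
    ultimately have "fdist p x d < e" using y(2) z(2) d(2) m' by linarith
    moreover have "d \<in> D" unfolding D_def using d(1) t'T by blast
    ultimately show ?thesis by blast
  qed
  have "fr_separable p (\<Union>t\<in>{0..1} - N. \<Gamma> t)"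
    unfolding fr_separable_def
  proof (intro exI conjI)
    show "countable D" by (rule cD)
    show "D \<subseteq> (\<Union>t\<in>{0..1} - N. \<Gamma> t)" by (rule DU)
    show "(\<Union>t\<in>{0..1} - N. \<Gamma> t) \<subseteq> fr_topology p closure_of D"
    proof
      fix x assume "x \<in> (\<Union>t\<in>{0..1} - N. \<Gamma> t)"
      then obtain t where "t \<in> {0..1} - N" "x \<in> \<Gamma> t" by blast
      then show "x \<in> fr_topology p closure_of D"
        using dense by (intro closure_fd[OF SN MONO]) blast
    qed
  qed
  moreover have "N \<subseteq> {0..1}" unfolding N_def by blast
  ultimately show ?thesis using Nnull by blast
qed

end
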